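(* For integers $n>p\ge 1$, the number of $123$-avoiding ordered partitions of $[n]$ into $n-p+1$ blocks, of which exactly one block has size $p$ and the other $n-p$ blocks have size $1$, is $$\frac{(n-p+1)(p+1)\binom{2n-p}{n-p}}{n+1}.$$
   Context: An ordered set partition of $[n]$ into $k$ blocks is a sequence $B_1/B_2/\cdots/B_k$ of nonempty, pairwise disjoint subsets of $[n]$ whose union is $[n]$; the order of the blocks matters, but not the order of elements within a block. Such a partition contains the pattern $123$ if there are block indices $i_1<i_2<i_3$ and elements $b_j\in B_{i_j}$ with $b_1<b_2<b_3$; otherwise it avoids $123$. *)

theory Defs
  imports Complex_Main
begin

definition ordered_set_partition :: "nat \<Rightarrow> nat set list \<Rightarrow> bool" where
  "ordered_set_partition n Bs \<longleftrightarrow>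
     (\<forall>i < length Bs. Bs ! i \<noteq> {}) \<and>
     (\<forall>i < length Bs. \<forall>j < length Bs. i \<noteq> j \<longrightarrow> Bs ! i \<inter> Bs ! j = {}) \<and>
     \<Union> (set Bs) = {1..n}"

definition contains_123 :: "nat set list \<Rightarrow> bool" where
  "contains_123 Bs \<longleftrightarrow>
     (\<exists>i1 i2 i3 b1 b2 b3. i1 < i2 \<and> i2 < i3 \<and> i3 < length Bs \<and>
        b1 \<in> Bs ! i1 \<and> b2 \<in> Bs ! i2 \<and> b3 \<in> Bs ! i3 \<and> b1 < b2 \<and> b2 < b3)"

definition avoids_123 :: "nat set list \<Rightarrow> bool" where
  "avoids_123 Bs \<longleftrightarrow> \<not> contains_123 Bs"

end

theory Submission
  imports Defs
begin

definition gi :: "nat \<Rightarrow> nat \<Rightarrow> nat \<Rightarrow> int" where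
  "gi N c p = int ((2*N-p-c) choose (N-c)) - int ((2*N-p-c) choose (N+1))"

lemma G1:
  assumes "c < N" "p \<le> N"
  shows "gi (Suc N) (Suc c) p = gi N c p + gi (Suc N) (Suc (Suc c)) p"
proof -
  obtain T where T: "2*N+1-p-c = Suc T" "T = 2*N-p-c" using assms by (intro that[of "2*N-p-c"]) auto
  have a: "2 * Suc N - p - Suc c = Suc T" using T assms by auto
  have b: "2 * Suc N - p - Suc (Suc c) = T" using T assms by auto
  obtain k where k: "N - c = Suc k" using assms by (metis Suc_diff_Suc)
  have c1: "Suc N - Suc c = Suc k" using k by simp
  have c2: "Suc N - Suc (Suc c) = k" using k by simp
  show ?thesis unfolding gi_def a b c1 c2 T(2)[symmetric] k
    by (simp add: numeral_2_eq_2)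
qed

lemma gi_diag: "p \<le> N \<Longrightarrow> gi N N p = 1"
  unfolding gi_def by simp

lemma G2:
  assumes "c \<le> N" "p \<le> N"
  shows "(\<Sum>r\<in>{c..N}. gi N r p) = gi (Suc N) (Suc c) p"
  using assms
proof (induction "N - c" arbitrary: c)
  case 0
  then have "c = N" by simp
  then show ?case using 0 by (simp add: gi_diag)
next
  case (Suc d)
  then have cN: "c < N" by simp
  have "{c..N} = insert c {Suc c..N}" using cN by auto
  then have "(\<Sum>r\<in>{c..N}. gi N r p) = gi N c p + (\<Sum>r\<in>{Suc c..N}. gi N r p)" by simp
  also have "(\<Sum>r\<in>{Suc c..N}. gi N r p) = gi (Suc N) (Suc (Suc c)) p"
    using Suc by simp
  finally show ?case using G1[OF cN Suc(4)] by simp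
qed

lemma G3:
  assumes "1 \<le> M" "q \<le> M"
  shows "gi M 0 q = gi M 1 q"
proof -
  obtain T where T: "2*M-q = Suc T" using assms by (intro that[of "2*M-q-1"]) auto
  obtain k where k: "M = Suc k" using assms by (cases M) auto
  have e: "2*M-q-1 = T" using T by simp
  show ?thesis unfolding gi_def e using T k by simp
qed

lemma G4:
  assumes "c \<le> M"
  shows "gi M c 0 = gi M c 1"
proof (cases "c = M")
  case True then show ?thesis by (simp add: gi_def binomial_eq_0)
next
  case False
  then have cM: "c < M" using assms by simp
  obtain T where T: "2*M-c = Suc T" "T = 2*M-1-c" using cM by (intro that[of "2*M-1-c"]) auto
  obtain k where k: "M - c = Suc k" using cM by (metis Suc_diff_Suc)
  have sym: "T choose k = T choose M"
  proof -
    have "k \<le> T" using T k by simp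
    then have "T choose k = T choose (T - k)" by (rule binomial_symmetric)
    moreover have "T - k = M" using T k by simp
    ultimately show ?thesis by simp
  qed
  have "gi M c 0 = int (Suc T choose Suc k) - int (Suc T choose Suc M)"
    unfolding gi_def using T k by simp
  also have "\<dots> = int (T choose k) + int (T choose Suc k) - int (T choose M) - int (T choose Suc M)"
    by simp
  also have "\<dots> = int (T choose Suc k) - int (T choose Suc M)" using sym by simp
  also have "\<dots> = gi M c 1" unfolding gi_def using T k by simp
  finally show ?thesis .
qed

lemma shift_sum:
  assumes "1 \<le> c"
  shows "(\<Sum>i<M. if c \<le> Suc i then h (Suc i) else (0::int)) = (\<Sum>r\<in>{c..M}. h r)"
proof -
  have "(\<Sum>i<M. if c \<le> Suc i then h (Suc i) else (0::int)) = (\<Sum>i\<in>{0..<M}. if c \<le> Suc i then h (Suc i) else (0::int))"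
    by (simp add: lessThan_atLeast0)
  also have "\<dots> = (\<Sum>r\<in>{Suc 0..<Suc M}. if c \<le> r then h r else 0)"
    by (rule sum.shift_bounds_Suc_ivl[symmetric])
  also have "\<dots> = (\<Sum>r\<in>{r\<in>{Suc 0..<Suc M}. c \<le> r}. h r)"
    by (rule sum.inter_filter[symmetric]) simp
  also have "{r\<in>{Suc 0..<Suc M}. c \<le> r} = {c..M}" using assms by auto
  finally show ?thesis .
qed

lemma Jid:
  assumes "1 \<le> N" "c \<le> N" "p < N"
  shows "(\<Sum>r<N. if r = 0 then gi (N-1) (c-1) p else if c \<le> r then gi (N-1) r p else 0) = gi N c p"
proof -
  obtain M where M: "N = Suc M" using assms by (cases N) auto
  have shiftN: "(\<Sum>r<N. f r) = f 0 + (\<Sum>i<M. f (Suc i))" for f :: "nat \<Rightarrow> int"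
    unfolding M by (rule sum.lessThan_Suc_shift)
  have NM: "N - 1 = M" "N - Suc 0 = M" using M by simp_all
  have gen: "(\<Sum>r<N. if r = 0 then gi (N-1) (c'-1) p else if c' \<le> r then gi (N-1) r p else 0)
       = gi M (c'-1) p + (\<Sum>r\<in>{c'..M}. gi M r p)" if "1 \<le> c'" for c'
  proof -
    have "(\<Sum>r<N. if r = 0 then gi (N-1) (c'-1) p else if c' \<le> r then gi (N-1) r p else 0)
       = gi M (c'-1) p + (\<Sum>i<M. if c' \<le> Suc i then gi M (Suc i) p else 0)"
      by (subst shiftN) (simp add: NM cong: if_cong)
    then show ?thesis using shift_sum[OF that] by simp
  qed
  have main: "(\<Sum>r<N. if r = 0 then gi (N-1) (c'-1) p else if c' \<le> r then gi (N-1) r p else 0) = gi N c' p"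
    if "1 \<le> c'" "c' \<le> N" for c'
  proof (cases "c' = N")
    case True
    then have "{c'..M} = {}" using M by auto
    then show ?thesis using gen[OF that(1)] True M assms by (simp add: gi_diag)
  next
    case False
    then have cM: "c' - 1 < M" "c' \<le> M" using that M by auto
    have "(\<Sum>r\<in>{c'..M}. gi M r p) = gi N (Suc c') p" using G2[of c' M p] cM assms M by simp
    moreover have "gi N c' p = gi M (c'-1) p + gi N (Suc c') p"
      using G1[OF cM(1), of p] assms M that by simp
    ultimately show ?thesis using gen[OF that(1)] by simp
  qed
  show ?thesis
  proof (cases "c = 0")
    case True
    have "(\<Sum>r<N. if r = 0 then gi (N-1) (c-1) p else if c \<le> r then gi (N-1) r p else 0)
        = (\<Sum>r<N. if r = 0 then gi (N-1) (1-1) p else if 1 \<le> r then gi (N-1) r p else 0)"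
      using True by (intro sum.cong) auto
    also have "\<dots> = gi N 1 p" using main[of 1] assms by simp
    also have "\<dots> = gi N c p" using G3[of N p] assms True by simp
    finally show ?thesis .
  next
    case False
    then show ?thesis using main[of c] assms by simp
  qed
qed

lemma Did:
  assumes "2 \<le> p" "p \<le> N" "c \<le> N"
  shows "(\<Sum>r<N. if r = 0 then gi (N-1) (c-1) (p-1) else if c \<le> r then gi (N-1) r (p-1) - gi (N-2) (r-1) (p-2) else 0) = gi N c p"
proof -
  obtain M where M: "N = Suc M" using assms by (cases N) auto
  have shiftN: "(\<Sum>r<N. f r) = f 0 + (\<Sum>i<M. f (Suc i))" for f :: "nat \<Rightarrow> int"
    unfolding M by (rule sum.lessThan_Suc_shift)
  have NM: "N - 1 = M" "N - Suc 0 = M" using M by simp_all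
  obtain K where K: "M = Suc K" using assms M by (cases M) auto
  have NK: "N - 2 = K" using M K by simp
  have gen: "(\<Sum>r<N. if r = 0 then gi (N-1) (c'-1) (p-1) else if c' \<le> r then gi (N-1) r (p-1) - gi (N-2) (r-1) (p-2) else 0)
       = gi M (c'-1) (p-1) + (\<Sum>r\<in>{c'..M}. gi M r (p-1)) - (\<Sum>r\<in>{c'..M}. gi K (r-1) (p-2))" if "1 \<le> c'" for c'
  proof -
    have "(\<Sum>r<N. if r = 0 then gi (N-1) (c'-1) (p-1) else if c' \<le> r then gi (N-1) r (p-1) - gi (N-2) (r-1) (p-2) else 0)
       = gi M (c'-1) (p-1) + (\<Sum>i<M. if c' \<le> Suc i then gi M (Suc i) (p-1) - gi K (Suc i - 1) (p-2) else 0)"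
      by (subst shiftN) (simp add: NM NK cong: if_cong)
    then show ?thesis using shift_sum[OF that, of "\<lambda>r. gi M r (p-1) - gi K (r-1) (p-2)"]
      by (simp add: sum_subtractf)
  qed
  have main: "(\<Sum>r<N. if r = 0 then gi (N-1) (c'-1) (p-1) else if c' \<le> r then gi (N-1) r (p-1) - gi (N-2) (r-1) (p-2) else 0) = gi N c' p"
    if "1 \<le> c'" "c' \<le> N" for c'
  proof (cases "c' = N")
    case True
    then have "{c'..M} = {}" using M by auto
    then show ?thesis using gen[OF that(1)] True M assms by (simp add: gi_diag)
  next
    case False
    then have cM: "c' - 1 < M" "c' \<le> M" "c' - 1 \<le> K" using that M K by auto
    have s1: "(\<Sum>r\<in>{c'..M}. gi M r (p-1)) = gi N (Suc c') (p-1)" using G2[of c' M "p-1"] cM assms M by simp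
    have eq: "{c'..M} = {Suc (c'-1)..Suc K}" using that K by auto
    have "(\<Sum>r\<in>{c'..M}. gi K (r-1) (p-2)) = (\<Sum>r\<in>{c'-1..K}. gi K r (p-2))"
      unfolding eq sum.shift_bounds_cl_Suc_ivl by simp
    also have "\<dots> = gi M c' (p-2)" using G2[of "c'-1" K "p-2"] cM assms K M that by simp
    finally have s2: "(\<Sum>r\<in>{c'..M}. gi K (r-1) (p-2)) = gi M c' (p-2)" .
    have key: "gi N c' p = gi M (c'-1) (p-1) + gi N (Suc c') (p-1) - gi M c' (p-2)"
    proof -
      have e1: "2*M - (p-1) - (c'-1) = 2*N-p-c'" using M that assms by simp
      have e2: "2*N - (p-1) - Suc c' = 2*N-p-c'" using M that assms by simp
      have e3: "2*M - (p-2) - c' = 2*N-p-c'" using M that assms by simp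
      have e4: "M - (c'-1) = N - c'" using M that by simp
      have e5: "N - Suc c' = M - c'" using M by simp
      show ?thesis unfolding gi_def e1 e2 e3 e4 e5 using M by simp
    qed
    show ?thesis using gen[OF that(1)] s1 s2 key by simp
  qed
  show ?thesis
  proof (cases "c = 0")
    case True
    have "(\<Sum>r<N. if r = 0 then gi (N-1) (c-1) (p-1) else if c \<le> r then gi (N-1) r (p-1) - gi (N-2) (r-1) (p-2) else 0)
        = (\<Sum>r<N. if r = 0 then gi (N-1) (1-1) (p-1) else if 1 \<le> r then gi (N-1) r (p-1) - gi (N-2) (r-1) (p-2) else 0)"
      using True by (intro sum.cong) auto
    also have "\<dots> = gi N 1 p" using main[of 1] assms by simp
    also have "\<dots> = gi N c p" using G3[of N p] assms True by simp
    finally show ?thesis .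
  next
    case False
    then show ?thesis using main[of c] assms by simp
  qed
qed

definition has12 :: "nat set list \<Rightarrow> nat \<Rightarrow> bool" where
  "has12 Bs lo \<longleftrightarrow> (\<exists>i k b1 b2. i < k \<and> k < length Bs \<and> b1 \<in> Bs!i \<and> b2 \<in> Bs!k \<and> lo \<le> b1 \<and> b1 < b2)"

definition FF :: "nat set list \<Rightarrow> nat \<Rightarrow> bool" where
  "FF Bs t \<longleftrightarrow> \<not> contains_123 Bs \<and> \<not> has12 Bs t"

lemma ex_nth_mem: "(\<exists>k<length Bs. b \<in> Bs!k) \<longleftrightarrow> b \<in> \<Union>(set Bs)"
  by (metis UnionE UnionI in_set_conv_nth)

lemma C1: "contains_123 (B # Bs) \<longleftrightarrow> contains_123 Bs \<or> (\<exists>b\<in>B. has12 Bs (Suc b))"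
proof
  assume "contains_123 (B # Bs)"
  then obtain i1 i2 i3 b1 b2 b3 where h: "i1 < i2" "i2 < i3" "i3 < length (B#Bs)"
    "b1 \<in> (B#Bs) ! i1" "b2 \<in> (B#Bs) ! i2" "b3 \<in> (B#Bs) ! i3" "b1 < b2" "b2 < b3"
    unfolding contains_123_def by blast
  obtain i2' where i2: "i2 = Suc i2'" using h(1) by (cases i2) auto
  obtain i3' where i3: "i3 = Suc i3'" using h(1,2) by (cases i3) auto
  note i = i2 i3
  show "contains_123 Bs \<or> (\<exists>b\<in>B. has12 Bs (Suc b))"
  proof (cases i1)
    case 0
    then have "b1 \<in> B" using h by simp
    moreover have "has12 Bs (Suc b1)" unfolding has12_def
      by (rule exI[of _ i2'], rule exI[of _ i3'], rule exI[of _ b2], rule exI[of _ b3]) (use h i in simp)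
    ultimately show ?thesis by blast
  next
    case (Suc i1')
    have "contains_123 Bs" unfolding contains_123_def
      by (rule exI[of _ i1'], rule exI[of _ i2'], rule exI[of _ i3'], rule exI[of _ b1], rule exI[of _ b2], rule exI[of _ b3]) (use h i Suc in simp)
    then show ?thesis by blast
  qed
next
  assume "contains_123 Bs \<or> (\<exists>b\<in>B. has12 Bs (Suc b))"
  then show "contains_123 (B # Bs)"
  proof
    assume "contains_123 Bs"
    then obtain i1 i2 i3 b1 b2 b3 where h: "i1 < i2" "i2 < i3" "i3 < length Bs"
      "b1 \<in> Bs ! i1" "b2 \<in> Bs ! i2" "b3 \<in> Bs ! i3" "b1 < b2" "b2 < b3"
      unfolding contains_123_def by blast
    show ?thesis unfolding contains_123_def
      by (rule exI[of _ "Suc i1"], rule exI[of _ "Suc i2"], rule exI[of _ "Suc i3"], rule exI[of _ b1], rule exI[of _ b2], rule exI[of _ b3]) (use h in simp)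
  next
    assume "\<exists>b\<in>B. has12 Bs (Suc b)"
    then obtain b i k b1 b2 where h: "b \<in> B" "i < k" "k < length Bs" "b1 \<in> Bs!i" "b2 \<in> Bs!k" "Suc b \<le> b1" "b1 < b2"
      unfolding has12_def by blast
    show ?thesis unfolding contains_123_def
      by (rule exI[of _ 0], rule exI[of _ "Suc i"], rule exI[of _ "Suc k"], rule exI[of _ b], rule exI[of _ b1], rule exI[of _ b2]) (use h in simp)
  qed
qed

lemma C2: "has12 (B # Bs) lo \<longleftrightarrow> has12 Bs lo \<or> (\<exists>b\<in>B. lo \<le> b \<and> (\<exists>b2\<in>\<Union>(set Bs). b < b2))"
proof
  assume "has12 (B # Bs) lo"
  then obtain i k b1 b2 where h: "i < k" "k < length (B#Bs)" "b1 \<in> (B#Bs)!i" "b2 \<in> (B#Bs)!k" "lo \<le> b1" "b1 < b2"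
    unfolding has12_def by blast
  obtain k' where k: "k = Suc k'" using h(1) by (cases k) auto
  show "has12 Bs lo \<or> (\<exists>b\<in>B. lo \<le> b \<and> (\<exists>b2\<in>\<Union>(set Bs). b < b2))"
  proof (cases i)
    case 0
    have "b2 \<in> \<Union>(set Bs)" using h k ex_nth_mem[of Bs b2] by auto
    then show ?thesis using h 0 by auto
  next
    case (Suc i')
    have "has12 Bs lo" unfolding has12_def
      by (rule exI[of _ i'], rule exI[of _ k'], rule exI[of _ b1], rule exI[of _ b2]) (use h k Suc in auto)
    then show ?thesis by blast
  qed
next
  assume "has12 Bs lo \<or> (\<exists>b\<in>B. lo \<le> b \<and> (\<exists>b2\<in>\<Union>(set Bs). b < b2))"
  then show "has12 (B # Bs) lo"
  proof
    assume "has12 Bs lo"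
    then obtain i k b1 b2 where h: "i < k" "k < length Bs" "b1 \<in> Bs!i" "b2 \<in> Bs!k" "lo \<le> b1" "b1 < b2"
      unfolding has12_def by blast
    show ?thesis unfolding has12_def
      by (rule exI[of _ "Suc i"], rule exI[of _ "Suc k"], rule exI[of _ b1], rule exI[of _ b2]) (use h in auto)
  next
    assume "\<exists>b\<in>B. lo \<le> b \<and> (\<exists>b2\<in>\<Union>(set Bs). b < b2)"
    then obtain b b2 k where h: "b \<in> B" "lo \<le> b" "k < length Bs" "b2 \<in> Bs!k" "b < b2"
      by (auto simp: in_set_conv_nth)
    show ?thesis unfolding has12_def
      by (rule exI[of _ 0], rule exI[of _ "Suc k"], rule exI[of _ b], rule exI[of _ b2]) (use h in auto)
  qed
qed

lemma has12_mono: "lo \<le> lo' \<Longrightarrow> has12 Bs lo' \<Longrightarrow> has12 Bs lo"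
  unfolding has12_def by (meson order_trans)

lemma has12_min: "has12 Bs (min a b) \<longleftrightarrow> has12 Bs a \<or> has12 Bs b"
  by (metis has12_mono min.cobounded1 min.cobounded2 min_def)

lemma L1: "FF ({x} # Bs) t \<longleftrightarrow> FF Bs (min t (Suc x)) \<and> (t \<le> x \<longrightarrow> (\<forall>b\<in>\<Union>(set Bs). b \<le> x))"
proof -
  have e: "(\<exists>b2\<in>\<Union>(set Bs). x < b2) \<longleftrightarrow> \<not> (\<forall>b\<in>\<Union>(set Bs). b \<le> x)" by (auto simp: not_le)
  show ?thesis unfolding FF_def C1 C2 has12_min using e by auto
qed

lemma L2a:
  assumes "\<forall>s\<in>S0. s < x" "S0 \<noteq> {}"
  shows "FF (insert x S0 # Bs) t \<longleftrightarrow> FF ({x} # S0 # Bs) t"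
proof -
  obtain s0 where s0: "s0 \<in> S0" using assms by auto
  have m: "has12 Bs (Suc x) \<Longrightarrow> has12 Bs (Suc s0)" using has12_mono[of "Suc s0" "Suc x"] assms s0 by auto
  have A: "contains_123 (insert x S0 # Bs) \<longleftrightarrow> contains_123 ({x} # S0 # Bs)"
  proof -
    have "(\<exists>b\<in>insert x S0. has12 Bs (Suc b)) \<longleftrightarrow> (\<exists>b\<in>S0. has12 Bs (Suc b)) \<or> has12 Bs (Suc x)" by auto
    moreover have "has12 (S0 # Bs) (Suc x) \<longleftrightarrow> has12 Bs (Suc x)"
      unfolding C2 using assms by auto
    ultimately show ?thesis unfolding C1 using m s0 by auto
  qed
  have B: "has12 (insert x S0 # Bs) t \<longleftrightarrow> has12 ({x} # S0 # Bs) t"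
  proof -
    have "(\<exists>b2\<in>\<Union>(set (S0 # Bs)). x < b2) \<longleftrightarrow> (\<exists>b2\<in>\<Union>(set Bs). x < b2)"
      using assms by auto
    then show ?thesis unfolding C2 by auto
  qed
  show ?thesis unfolding FF_def A B ..
qed

lemma L2:
  assumes "sorted_wrt (>) ds" "ds \<noteq> []"
  shows "FF (set ds # Bs) t \<longleftrightarrow> FF (map (\<lambda>x. {x}) ds @ Bs) t"
  using assms
proof (induction ds arbitrary: t)
  case Nil then show ?case by simp
next
  case (Cons x ds)
  show ?case
  proof (cases "ds = []")
    case True then show ?thesis by simp
  next
    case False
    have lt: "\<forall>s\<in>set ds. s < x" using Cons.prems by simp
    have sd: "sorted_wrt (>) ds" using Cons.prems by simp
    have "FF (set (x # ds) # Bs) t \<longleftrightarrow> FF ({x} # set ds # Bs) t"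
      using L2a[OF lt] False by simp
    also have "\<dots> \<longleftrightarrow> FF (set ds # Bs) (min t (Suc x)) \<and> (t \<le> x \<longrightarrow> (\<forall>b\<in>\<Union>(set (set ds # Bs)). b \<le> x))"
      by (rule L1)
    also have "\<dots> \<longleftrightarrow> FF (map (\<lambda>x. {x}) ds @ Bs) (min t (Suc x)) \<and> (t \<le> x \<longrightarrow> (\<forall>b\<in>\<Union>(set (map (\<lambda>x. {x}) ds @ Bs)). b \<le> x))"
      using Cons.IH[OF sd False] by auto
    also have "\<dots> \<longleftrightarrow> FF ({x} # map (\<lambda>x. {x}) ds @ Bs) t"
      by (rule L1[symmetric])
    finally show ?thesis by simp
  qed
qed

lemma L3:
  assumes "\<And>t. FF X t \<longleftrightarrow> FF Y t" "\<Union>(set X) = \<Union>(set Y)"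
  shows "FF (map (\<lambda>x. {x}) L @ X) t \<longleftrightarrow> FF (map (\<lambda>x. {x}) L @ Y) t"
proof (induction L arbitrary: t)
  case Nil then show ?case using assms by simp
next
  case (Cons a L)
  have "FF (map (\<lambda>x. {x}) (a # L) @ X) t \<longleftrightarrow> FF ({a} # (map (\<lambda>x. {x}) L @ X)) t" by simp
  also have "\<dots> \<longleftrightarrow> FF (map (\<lambda>x. {x}) L @ Y) (min t (Suc a)) \<and> (t \<le> a \<longrightarrow> (\<forall>b\<in>\<Union>(set (map (\<lambda>x. {x}) L @ Y)). b \<le> a))"
    unfolding L1 using Cons.IH assms(2) by simp
  also have "\<dots> \<longleftrightarrow> FF ({a} # (map (\<lambda>x. {x}) L @ Y)) t" by (rule L1[symmetric])
  finally show ?case by simp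
qed

lemma blocks_equiv:
  assumes "sorted_wrt (>) ds" "ds \<noteq> []"
  shows "FF (map (\<lambda>x. {x}) L @ set ds # map (\<lambda>x. {x}) R) t \<longleftrightarrow> FF (map (\<lambda>x. {x}) (L @ ds @ R)) t"
proof -
  have "FF (map (\<lambda>x. {x}) L @ set ds # map (\<lambda>x. {x}) R) t \<longleftrightarrow> FF (map (\<lambda>x. {x}) L @ (map (\<lambda>x. {x}) ds @ map (\<lambda>x. {x}) R)) t"
    by (rule L3) (use L2[OF assms] in auto)
  then show ?thesis by simp
qed

definition W :: "nat set \<Rightarrow> nat \<Rightarrow> nat \<Rightarrow> nat \<Rightarrow> nat list set" where
  "W A j p t = {\<tau>. distinct \<tau> \<and> set \<tau> = A \<and> FF (map (\<lambda>x. {x}) \<tau>) t \<and> sorted_wrt (>) (take p (drop j \<tau>))}"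

definition cnt :: "nat set \<Rightarrow> nat \<Rightarrow> nat" where
  "cnt A t = card {a\<in>A. t \<le> a}"

definition rk :: "nat set \<Rightarrow> nat \<Rightarrow> nat" where
  "rk A x = card {a\<in>A. x < a}"

lemma finite_arr: "finite A \<Longrightarrow> finite {\<tau>. distinct \<tau> \<and> set \<tau> = A \<and> P \<tau>}"
proof -
  assume "finite A"
  then have "finite {xs. set xs \<subseteq> A \<and> length xs \<le> card A}" by (rule finite_lists_length_le)
  moreover have "{\<tau>. distinct \<tau> \<and> set \<tau> = A \<and> P \<tau>} \<subseteq> {xs. set xs \<subseteq> A \<and> length xs \<le> card A}"
    by (auto dest: distinct_card)
  ultimately show ?thesis by (rule finite_subset[rotated])
qed

lemma peel:
  assumes "finite A"
  shows "card {\<tau>. distinct \<tau> \<and> set \<tau> = A \<and> \<tau> \<noteq> [] \<and> P \<tau>} = (\<Sum>x\<in>A. card {\<tau>'. distinct \<tau>' \<and> set \<tau>' = A - {x} \<and> P (x # \<tau>')})"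
proof -
  define S where "S = (\<lambda>x. {\<tau>'. distinct \<tau>' \<and> set \<tau>' = A - {x} \<and> P (x # \<tau>')})"
  have eq: "{\<tau>. distinct \<tau> \<and> set \<tau> = A \<and> \<tau> \<noteq> [] \<and> P \<tau>} = (\<Union>x\<in>A. (#) x ` S x)"
  proof (intro equalityI subsetI)
    fix \<tau> assume a: "\<tau> \<in> {\<tau>. distinct \<tau> \<and> set \<tau> = A \<and> \<tau> \<noteq> [] \<and> P \<tau>}"
    then obtain x \<tau>' where t: "\<tau> = x # \<tau>'" by (cases \<tau>) auto
    have "distinct (x # \<tau>')" "set (x#\<tau>') = A" "P (x # \<tau>')" using a t by auto
    then have "x \<in> A" "\<tau>' \<in> S x" unfolding S_def by auto
    then show "\<tau> \<in> (\<Union>x\<in>A. (#) x ` S x)" using t by blast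
  next
    fix \<tau> assume "\<tau> \<in> (\<Union>x\<in>A. (#) x ` S x)"
    then obtain x \<tau>' where "x \<in> A" "\<tau>' \<in> S x" "\<tau> = x # \<tau>'" by blast
    then show "\<tau> \<in> {\<tau>. distinct \<tau> \<and> set \<tau> = A \<and> \<tau> \<noteq> [] \<and> P \<tau>}" unfolding S_def by auto
  qed
  have fin: "finite (S x)" for x unfolding S_def using assms by (intro finite_arr) simp
  have "card (\<Union>x\<in>A. (#) x ` S x) = (\<Sum>x\<in>A. card ((#) x ` S x))"
  proof (rule card_UN_disjoint)
    show "finite A" by (rule assms)
    show "\<forall>i\<in>A. finite ((#) i ` S i)" using fin by blast
    show "\<forall>i\<in>A. \<forall>j\<in>A. i \<noteq> j \<longrightarrow> (#) i ` S i \<inter> (#) j ` S j = {}" by blast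
  qed
  also have "\<dots> = (\<Sum>x\<in>A. card (S x))"
    by (intro sum.cong refl card_image) (simp add: inj_on_def)
  finally show ?thesis using eq unfolding S_def by simp
qed

lemma peel_hd:
  assumes "M \<in> A"
  shows "card {\<tau>. distinct \<tau> \<and> set \<tau> = A \<and> P \<tau> \<and> hd \<tau> = M} = card {\<tau>'. distinct \<tau>' \<and> set \<tau>' = A - {M} \<and> P (M # \<tau>')}"
proof -
  define S where "S = {\<tau>'. distinct \<tau>' \<and> set \<tau>' = A - {M} \<and> P (M # \<tau>')}"
  have "{\<tau>. distinct \<tau> \<and> set \<tau> = A \<and> P \<tau> \<and> hd \<tau> = M} = (#) M ` S"
  proof (intro equalityI subsetI)
    fix \<tau> assume a: "\<tau> \<in> {\<tau>. distinct \<tau> \<and> set \<tau> = A \<and> P \<tau> \<and> hd \<tau> = M}"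
    then have "\<tau> \<noteq> []" using assms by auto
    then obtain \<tau>' where t: "\<tau> = M # \<tau>'" using a by (cases \<tau>) auto
    have "distinct (M # \<tau>')" "set (M#\<tau>') = A" "P (M # \<tau>')" using a t by auto
    then have "\<tau>' \<in> S" unfolding S_def by auto
    then show "\<tau> \<in> (#) M ` S" using t by blast
  next
    fix \<tau> assume "\<tau> \<in> (#) M ` S"
    then obtain \<tau>' where "\<tau>' \<in> S" "\<tau> = M # \<tau>'" by blast
    then show "\<tau> \<in> {\<tau>. distinct \<tau> \<and> set \<tau> = A \<and> P \<tau> \<and> hd \<tau> = M}" unfolding S_def using assms by auto
  qed
  then show ?thesis unfolding S_def by (simp add: card_image)
qed

lemma rk_le: "finite A \<Longrightarrow> x \<in> A \<Longrightarrow> rk A x < card A"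
  unfolding rk_def by (rule psubset_card_mono) auto

lemma reindex_rk:
  assumes "finite A"
  shows "(\<Sum>x\<in>A. f (rk A x)) = (\<Sum>r<card A. f r)"
proof -
  have inj: "inj_on (rk A) A"
  proof (rule inj_onI)
    fix x y assume xy: "x \<in> A" "y \<in> A" "rk A x = rk A y"
    show "x = y"
    proof (rule ccontr)
      assume "x \<noteq> y"
      then have "x < y \<or> y < x" by auto
      then show False
      proof
        assume "x < y"
        then have "{a\<in>A. y < a} \<subset> {a\<in>A. x < a}" using xy by auto
        then have "rk A y < rk A x" unfolding rk_def using assms by (intro psubset_card_mono) auto
        then show False using xy by simp
      next
        assume "y < x"
        then have "{a\<in>A. x < a} \<subset> {a\<in>A. y < a}" using xy by auto
        then have "rk A x < rk A y" unfolding rk_def using assms by (intro psubset_card_mono) auto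
        then show False using xy by simp
      qed
    qed
  qed
  have img: "rk A ` A = {..<card A}"
  proof (rule card_subset_eq)
    show "rk A ` A \<subseteq> {..<card A}" using rk_le assms by auto
    show "card (rk A ` A) = card {..<card A}" using card_image[OF inj] by simp
  qed simp
  have "(\<Sum>x\<in>A. f (rk A x)) = (\<Sum>r\<in>rk A ` A. f r)" using sum.reindex[OF inj, of f] by simp
  then show ?thesis using img by simp
qed

lemma rk_zero: "finite A \<Longrightarrow> x \<in> A \<Longrightarrow> rk A x = 0 \<longleftrightarrow> (\<forall>b\<in>A-{x}. b \<le> x)"
  unfolding rk_def by (auto simp: not_less)

lemma rk_zero_Max: "finite A \<Longrightarrow> x \<in> A \<Longrightarrow> rk A x = 0 \<longleftrightarrow> x = Max A"
proof -
  assume f: "finite A" and x: "x \<in> A"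
  show ?thesis
  proof
    assume "rk A x = 0"
    then have "\<forall>b\<in>A-{x}. b \<le> x" using rk_zero[OF f x] by simp
    then show "x = Max A" using f x by (intro Max_eqI[symmetric]) auto
  next
    assume "x = Max A"
    then have "\<forall>b\<in>A-{x}. b \<le> x" using f by auto
    then show "rk A x = 0" using rk_zero[OF f x] by simp
  qed
qed

lemma cond_iff: "finite A \<Longrightarrow> x \<in> A \<Longrightarrow> (t \<le> x \<longrightarrow> rk A x = 0) \<longleftrightarrow> (rk A x = 0 \<or> cnt A t \<le> rk A x)"
proof -
  assume fin: "finite A" and x: "x \<in> A"
  show ?thesis
  proof (cases "t \<le> x")
    case True
    have "{a\<in>A. x < a} \<subset> {a\<in>A. t \<le> a}" using True x by auto
    then have "rk A x < cnt A t" unfolding rk_def cnt_def using fin by (intro psubset_card_mono) auto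
    then show ?thesis using True by auto
  next
    case False
    have "{a\<in>A. t \<le> a} \<subseteq> {a\<in>A. x < a}" using False by auto
    then have "cnt A t \<le> rk A x" unfolding rk_def cnt_def using fin by (intro card_mono) auto
    then show ?thesis using False by auto
  qed
qed

lemma cnt_rem:
  assumes fin: "finite A" and x: "x \<in> A" and c: "t \<le> x \<longrightarrow> rk A x = 0"
  shows "cnt (A - {x}) (min t (Suc x)) = (if rk A x = 0 then cnt A t - 1 else rk A x)"
proof (cases "rk A x = 0")
  case True
  then have le: "\<forall>b\<in>A-{x}. b \<le> x" using rk_zero[OF fin x] by simp
  have "{a\<in>A-{x}. min t (Suc x) \<le> a} = {a\<in>A. t \<le> a} - {x}"
  proof (intro equalityI subsetI)
    fix a assume "a \<in> {a\<in>A-{x}. min t (Suc x) \<le> a}"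
    then have a: "a \<in> A" "a \<noteq> x" "min t (Suc x) \<le> a" by auto
    moreover have "a \<le> x" using le a by auto
    ultimately show "a \<in> {a\<in>A. t \<le> a} - {x}" by (auto simp: min_def split: if_splits)
  qed auto
  then have "cnt (A - {x}) (min t (Suc x)) = cnt A t - (if t \<le> x then 1 else 0)"
  proof -
    have "card ({a\<in>A. t \<le> a} - {x}) = card {a\<in>A. t \<le> a} - (if t \<le> x then 1 else 0)"
      using x fin by (simp add: card_Diff_singleton_if)
    then show ?thesis unfolding cnt_def using \<open>{a\<in>A-{x}. min t (Suc x) \<le> a} = {a\<in>A. t \<le> a} - {x}\<close> by simp
  qed
  moreover have "cnt A t = 0" if "\<not> t \<le> x"
  proof -
    have e0: "{a\<in>A. t \<le> a} = {}"
    proof (rule ccontr)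
      assume "{a\<in>A. t \<le> a} \<noteq> {}"
      then obtain a where a: "a \<in> A" "t \<le> a" by auto
      have "a \<le> x" using le a by (cases "a = x") auto
      then show False using a that by simp
    qed
    show ?thesis unfolding cnt_def e0 by (rule card.empty)
  qed
  ultimately show ?thesis using True by auto
next
  case False
  then have "x < t" using c by auto
  then have "min t (Suc x) = Suc x" by simp
  moreover have "{a\<in>A-{x}. Suc x \<le> a} = {a\<in>A. x < a}" by auto
  ultimately show ?thesis using False unfolding cnt_def rk_def by (simp del: Suc_le_eq)
qed

lemma cnt_le: "finite A \<Longrightarrow> cnt A t \<le> card A"
  unfolding cnt_def by (intro card_mono) auto

lemma has12_sing: "has12 (map (\<lambda>x. {x}) \<tau>) lo \<longleftrightarrow> (\<exists>i k. i < k \<and> k < length \<tau> \<and> lo \<le> \<tau>!i \<and> \<tau>!i < \<tau>!k)"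
proof
  assume "has12 (map (\<lambda>x. {x}) \<tau>) lo"
  then obtain i k b1 b2 where h: "i < k" "k < length (map (\<lambda>x. {x}) \<tau>)" "b1 \<in> map (\<lambda>x. {x}) \<tau> ! i"
    "b2 \<in> map (\<lambda>x. {x}) \<tau> ! k" "lo \<le> b1" "b1 < b2" unfolding has12_def by blast
  then have "b1 = \<tau>!i" "b2 = \<tau>!k" "k < length \<tau>" by auto
  then show "\<exists>i k. i < k \<and> k < length \<tau> \<and> lo \<le> \<tau>!i \<and> \<tau>!i < \<tau>!k" using h by blast
next
  assume "\<exists>i k. i < k \<and> k < length \<tau> \<and> lo \<le> \<tau>!i \<and> \<tau>!i < \<tau>!k"
  then obtain i k where h: "i < k" "k < length \<tau>" "lo \<le> \<tau>!i" "\<tau>!i < \<tau>!k" by blast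
  show "has12 (map (\<lambda>x. {x}) \<tau>) lo" unfolding has12_def
    by (rule exI[of _ i], rule exI[of _ k], rule exI[of _ "\<tau>!i"], rule exI[of _ "\<tau>!k"]) (use h in simp)
qed

lemma FF_cons_sing: "FF (map (\<lambda>x. {x}) (x # \<tau>')) t \<longleftrightarrow> FF (map (\<lambda>x. {x}) \<tau>') (min t (Suc x)) \<and> (t \<le> x \<longrightarrow> (\<forall>b\<in>set \<tau>'. b \<le> x))"
proof -
  have "\<Union>(set (map (\<lambda>x. {x}) \<tau>')) = set \<tau>'" by auto
  then show ?thesis using L1[of x "map (\<lambda>x. {x}) \<tau>'" t] by simp
qed

lemma key_hd:
  assumes d: "distinct \<tau>'" and s: "set \<tau>' = A'" and ne: "A' \<noteq> {}" and fin: "finite A'"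
    and xn: "x \<notin> A'" and nh: "\<not> has12 (map (\<lambda>x. {x}) \<tau>') (Suc x)"
    and so: "sorted_wrt (>) (take q \<tau>')" and q: "1 \<le> q"
  shows "(\<forall>y\<in>set (take q \<tau>'). y < x) \<longleftrightarrow> (hd \<tau>' \<noteq> Max A' \<or> (\<forall>a\<in>A'. a < x))"
proof -
  have tne: "\<tau>' \<noteq> []" using s ne by auto
  then obtain h rest where hr: "\<tau>' = h # rest" by (cases \<tau>') auto
  have tk: "take q \<tau>' = h # take (q - 1) rest" using hr q by (cases q) auto
  have hin: "h \<in> set (take q \<tau>')" using tk by simp
  have hA: "h \<in> A'" using hr s by auto
  have yle: "y \<le> h" if "y \<in> set (take q \<tau>')" for y
    using so that unfolding tk by auto
  show ?thesis
  proof
    assume all: "\<forall>y\<in>set (take q \<tau>'). y < x"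
    show "hd \<tau>' \<noteq> Max A' \<or> (\<forall>a\<in>A'. a < x)"
    proof (cases "hd \<tau>' = Max A'")
      case True
      then have "Max A' < x" using all hin hr by simp
      then have "\<forall>a\<in>A'. a < x" using fin by (meson Max_ge le_less_trans)
      then show ?thesis by blast
    qed blast
  next
    assume r: "hd \<tau>' \<noteq> Max A' \<or> (\<forall>a\<in>A'. a < x)"
    show "\<forall>y\<in>set (take q \<tau>'). y < x"
    proof
      fix y assume y: "y \<in> set (take q \<tau>')"
      then have yA: "y \<in> A'" using s by (meson in_set_takeD)
      show "y < x"
      proof (cases "\<forall>a\<in>A'. a < x")
        case True then show ?thesis using yA by blast
      next
        case False
        then have hM: "h \<noteq> Max A'" using r hr by auto
        have MA: "Max A' \<in> A'" using fin ne by simp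
        then obtain k where k: "k < length \<tau>'" "\<tau>' ! k = Max A'" using s by (metis in_set_conv_nth)
        have k0: "k \<noteq> 0"
        proof
          assume "k = 0"
          then have "h = Max A'" using k hr by simp
          then show False using hM by simp
        qed
        have hlt: "h < Max A'" using hM hA fin by (meson Max_ge le_neq_trans)
        have "\<not> Suc x \<le> h"
        proof
          assume "Suc x \<le> h"
          then have "has12 (map (\<lambda>x. {x}) \<tau>') (Suc x)" unfolding has12_sing
            using k k0 hlt hr by (intro exI[of _ 0] exI[of _ k]) auto
          then show False using nh by simp
        qed
        moreover have "h \<noteq> x" using hA xn by auto
        ultimately have "h < x" by simp
        then show ?thesis using yle[OF y] by simp
      qed
    qed
  qed
qed

lemma W_empty: "W {} 0 0 t = {[]}"
proof -
  have "FF [] t" unfolding FF_def contains_123_def has12_def by simp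
  then show ?thesis unfolding W_def by auto
qed

lemma W_p1: "W A 0 1 t = W A 0 0 t"
  unfolding W_def by (auto intro: sorted_wrt01)

lemma W_peel:
  assumes "finite A" "A \<noteq> {}"
  shows "card (W A j p t) = (\<Sum>x\<in>A. card {\<tau>'. distinct \<tau>' \<and> set \<tau>' = A - {x} \<and>
          FF (map (\<lambda>x. {x}) (x # \<tau>')) t \<and> sorted_wrt (>) (take p (drop j (x # \<tau>')))})"
proof -
  have "W A j p t = {\<tau>. distinct \<tau> \<and> set \<tau> = A \<and> \<tau> \<noteq> [] \<and> (FF (map (\<lambda>x. {x}) \<tau>) t \<and> sorted_wrt (>) (take p (drop j \<tau>)))}"
    unfolding W_def using assms by auto
  then show ?thesis using peel[OF assms(1), of "\<lambda>\<tau>. FF (map (\<lambda>x. {x}) \<tau>) t \<and> sorted_wrt (>) (take p (drop j \<tau>))"]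
    by simp
qed

lemma sorted_cons_gt: "sorted_wrt (>) (x # ys) \<longleftrightarrow> (\<forall>y\<in>set ys. y < x) \<and> sorted_wrt (>) ys"
  by auto

lemma Wcount:
  assumes "finite A" "j + p \<le> card A"
  shows "int (card (W A j p t)) = gi (card A) (cnt A t) p"
  using assms
proof (induction "card A" arbitrary: A j p t rule: less_induct)
  case less
  define N where "N = card A"
  define c where "c = cnt A t"
  have fin: "finite A" using less.prems by simp
  show ?case
  proof (cases "A = {}")
    case True
    then have "j = 0" "p = 0" using less.prems by auto
    then show ?thesis using True W_empty by (simp add: gi_def cnt_def)
  next
    case False
    note Ane = False
    have N1: "1 \<le> N" using False fin N_def by (simp add: Suc_leI card_gt_0_iff)
    have cN: "c \<le> N" using cnt_le fin c_def N_def by simp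
    have IH: "\<And>A' j' p' t'. finite A' \<Longrightarrow> card A' < N \<Longrightarrow> j' + p' \<le> card A' \<Longrightarrow>
        int (card (W A' j' p' t')) = gi (card A') (cnt A' t') p'"
      using less.hyps N_def by simp
    have caseA: "int (card (W A j' p' t)) = gi N c p'" if jp: "0 < j' \<or> p' = 0" "j' + p' \<le> N" for j' p'
    proof -
      define f where "f r = (if r = 0 then gi (N-1) (c-1) p' else if c \<le> r then gi (N-1) r p' else 0)" for r
      have inner: "int (card {\<tau>'. distinct \<tau>' \<and> set \<tau>' = A - {x} \<and> FF (map (\<lambda>x. {x}) (x # \<tau>')) t \<and>
            sorted_wrt (>) (take p' (drop j' (x # \<tau>')))}) = f (rk A x)" if x: "x \<in> A" for x
      proof -
        have tk: "take p' (drop j' (x # \<tau>')) = take p' (drop (j'-1) \<tau>')" for \<tau>'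
          using jp(1) by (cases j') auto
        have cA: "card (A - {x}) = N - 1" using x fin N_def by simp
        have rz: "(\<forall>b\<in>A-{x}. b \<le> x) \<longleftrightarrow> rk A x = 0" using rk_zero[OF fin x] by simp
        show ?thesis
        proof (cases "t \<le> x \<longrightarrow> rk A x = 0")
          case True
          have "{\<tau>'. distinct \<tau>' \<and> set \<tau>' = A - {x} \<and> FF (map (\<lambda>x. {x}) (x # \<tau>')) t \<and>
            sorted_wrt (>) (take p' (drop j' (x # \<tau>')))} = W (A-{x}) (j'-1) p' (min t (Suc x))"
            unfolding W_def FF_cons_sing tk using rz True by auto
          moreover have "int (card (W (A-{x}) (j'-1) p' (min t (Suc x)))) = gi (N-1) (cnt (A-{x}) (min t (Suc x))) p'"
            using IH[of "A-{x}" "j'-1" p' "min t (Suc x)"] fin cA N1 jp by auto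
          moreover have "cnt (A-{x}) (min t (Suc x)) = (if rk A x = 0 then c - 1 else rk A x)"
            using cnt_rem[OF fin x True] c_def by simp
          moreover have "rk A x = 0 \<or> c \<le> rk A x" using True cond_iff[OF fin x] c_def by simp
          ultimately show ?thesis unfolding f_def by auto
        next
          case False
          have e: "{\<tau>'. distinct \<tau>' \<and> set \<tau>' = A - {x} \<and> FF (map (\<lambda>x. {x}) (x # \<tau>')) t \<and>
            sorted_wrt (>) (take p' (drop j' (x # \<tau>')))} = {}"
            unfolding FF_cons_sing using rz False by auto
          have "\<not> (rk A x = 0 \<or> c \<le> rk A x)" using False cond_iff[OF fin x] c_def by simp
          then show ?thesis unfolding f_def e by auto
        qed
      qed
      have "int (card (W A j' p' t)) = (\<Sum>x\<in>A. int (card {\<tau>'. distinct \<tau>' \<and> set \<tau>' = A - {x} \<and>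
          FF (map (\<lambda>x. {x}) (x # \<tau>')) t \<and> sorted_wrt (>) (take p' (drop j' (x # \<tau>')))}))"
        unfolding W_peel[OF fin Ane] by simp
      also have "\<dots> = (\<Sum>x\<in>A. f (rk A x))" using inner by (rule sum.cong[OF refl])
      also have "\<dots> = (\<Sum>r<N. f r)" using reindex_rk[OF fin] N_def by simp
      also have "\<dots> = gi N c p'"
      proof -
        have "p' < N" using jp N1 by auto
        then show ?thesis unfolding f_def by (rule Jid[OF N1 cN])
      qed
      finally show ?thesis .
    qed
    show ?thesis
    proof (cases "0 < j \<or> p = 0")
      case True then show ?thesis using caseA[OF True] less.prems N_def c_def by simp
    next
      case False
      then have j0: "j = 0" and p1: "1 \<le> p" by auto
      show ?thesis
      proof (cases "p = 1")
        case True
        have "int (card (W A 0 0 t)) = gi N c 0" using caseA[of 0 0] by simp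
        then show ?thesis using True j0 W_p1 G4[OF cN] N_def c_def by simp
      next
        case False
        then have p2: "2 \<le> p" using p1 by simp
        have pN: "p \<le> N" using less.prems j0 N_def by simp
        define f where "f r = (if r = 0 then gi (N-1) (c-1) (p-1) else if c \<le> r then gi (N-1) r (p-1) - gi (N-2) (r-1) (p-2) else 0)" for r
        have inner: "int (card {\<tau>'. distinct \<tau>' \<and> set \<tau>' = A - {x} \<and> FF (map (\<lambda>x. {x}) (x # \<tau>')) t \<and>
              sorted_wrt (>) (take p (drop 0 (x # \<tau>')))}) = f (rk A x)" if x: "x \<in> A" for x
        proof -
          define A' where "A' = A - {x}"
          define t' where "t' = min t (Suc x)"
          have finA': "finite A'" using fin A'_def by simp
          have cA: "card A' = N - 1" using x fin N_def A'_def by simp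
          have A'ne: "A' \<noteq> {}" using cA pN p2 by auto
          have xn: "x \<notin> A'" using A'_def by simp
          have rz: "(\<forall>b\<in>A'. b \<le> x) \<longleftrightarrow> rk A x = 0" using rk_zero[OF fin x] A'_def by simp
          have tk: "take p (drop 0 (x # \<tau>')) = x # take (p-1) \<tau>'" for \<tau>'
            using p2 by (cases p) auto
          show ?thesis
          proof (cases "t \<le> x \<longrightarrow> rk A x = 0")
            case False
            have e: "{\<tau>'. distinct \<tau>' \<and> set \<tau>' = A - {x} \<and> FF (map (\<lambda>x. {x}) (x # \<tau>')) t \<and>
              sorted_wrt (>) (take p (drop 0 (x # \<tau>')))} = {}"
              unfolding FF_cons_sing using rz False A'_def by auto
            have "\<not> (rk A x = 0 \<or> c \<le> rk A x)" using False cond_iff[OF fin x] c_def by simp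
            then show ?thesis unfolding f_def e by auto
          next
            case True
            note cond = True
            have e1: "{\<tau>'. distinct \<tau>' \<and> set \<tau>' = A - {x} \<and> FF (map (\<lambda>x. {x}) (x # \<tau>')) t \<and>
              sorted_wrt (>) (take p (drop 0 (x # \<tau>')))} = {\<tau>'\<in>W A' 0 (p-1) t'. \<forall>y\<in>set (take (p-1) \<tau>'). y < x}"
              unfolding W_def FF_cons_sing tk sorted_cons_gt using rz cond A'_def t'_def by auto
            have kh: "(\<forall>y\<in>set (take (p-1) \<tau>'). y < x) \<longleftrightarrow> (hd \<tau>' \<noteq> Max A' \<or> (\<forall>a\<in>A'. a < x))"
              if "\<tau>' \<in> W A' 0 (p-1) t'" for \<tau>'
            proof -
              have nh: "\<not> has12 (map (\<lambda>x. {x}) \<tau>') (Suc x)"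
                using that has12_mono[of t' "Suc x"] unfolding W_def FF_def t'_def by auto
              show ?thesis using key_hd[of \<tau>' A' x "p-1"] that nh A'ne finA' xn p2 unfolding W_def by auto
            qed
            have cntA': "cnt A' t' = (if rk A x = 0 then c - 1 else rk A x)"
              using cnt_rem[OF fin x cond] c_def A'_def t'_def by simp
            have condr: "rk A x = 0 \<or> c \<le> rk A x" using cond cond_iff[OF fin x] c_def by simp
            show ?thesis
            proof (cases "rk A x = 0")
              case True
              have all: "\<forall>a\<in>A'. a < x" using True rz xn by (metis le_neq_implies_less)
              have "{\<tau>'\<in>W A' 0 (p-1) t'. \<forall>y\<in>set (take (p-1) \<tau>'). y < x} = W A' 0 (p-1) t'"
                using kh all by auto
              moreover have "int (card (W A' 0 (p-1) t')) = gi (N-1) (cnt A' t') (p-1)"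
                using IH[of A' 0 "p-1" t'] finA' cA N1 pN by auto
              ultimately show ?thesis unfolding e1 f_def using True cntA' by simp
            next
              case False
              note rk0 = False
              have nall: "\<not> (\<forall>a\<in>A'. a < x)"
              proof
                assume "\<forall>a\<in>A'. a < x"
                then have "\<forall>b\<in>A'. b \<le> x" by auto
                then show False using rz rk0 by simp
              qed
              have xt: "x < t" using cond rk0 by auto
              have t'e: "t' = Suc x" using xt t'_def by simp
              define M where "M = Max A'"
              have MA: "M \<in> A'" using finA' A'ne M_def by simp
              have xM: "x < M"
              proof -
                obtain a where a: "a \<in> A'" "\<not> a < x" using nall by blast
                have "a \<noteq> x" using a xn by auto
                then have "x < a" using a by simp
                moreover have "a \<le> M" using a finA' M_def by simp
                ultimately show ?thesis by simp
              qed
              have e2: "{\<tau>'\<in>W A' 0 (p-1) t'. \<forall>y\<in>set (take (p-1) \<tau>'). y < x}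
                 = W A' 0 (p-1) t' - {\<tau>'\<in>W A' 0 (p-1) t'. hd \<tau>' = M}"
                using kh nall M_def by auto
              have finW: "finite (W A' 0 (p-1) t')" unfolding W_def using finA' by (rule finite_arr)
              have cardsub: "card (W A' 0 (p-1) t' - {\<tau>'\<in>W A' 0 (p-1) t'. hd \<tau>' = M})
                  = card (W A' 0 (p-1) t') - card {\<tau>'\<in>W A' 0 (p-1) t'. hd \<tau>' = M}"
                using finW by (intro card_Diff_subset) auto
              have le1: "card {\<tau>'\<in>W A' 0 (p-1) t'. hd \<tau>' = M} \<le> card (W A' 0 (p-1) t')"
                using finW by (intro card_mono) auto
              have hdset: "card {\<tau>'\<in>W A' 0 (p-1) t'. hd \<tau>' = M} = card (W (A' - {M}) 0 (p-2) (min t' (Suc M)))"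
              proof -
                have "{\<tau>'\<in>W A' 0 (p-1) t'. hd \<tau>' = M} = {\<tau>. distinct \<tau> \<and> set \<tau> = A' \<and>
                    (FF (map (\<lambda>x. {x}) \<tau>) t' \<and> sorted_wrt (>) (take (p-1) \<tau>)) \<and> hd \<tau> = M}"
                  unfolding W_def by auto
                then have "card {\<tau>'\<in>W A' 0 (p-1) t'. hd \<tau>' = M} = card {\<tau>''. distinct \<tau>'' \<and> set \<tau>'' = A' - {M} \<and>
                    (FF (map (\<lambda>x. {x}) (M # \<tau>'')) t' \<and> sorted_wrt (>) (take (p-1) (M # \<tau>'')))}"
                  using peel_hd[OF MA, of "\<lambda>\<tau>. FF (map (\<lambda>x. {x}) \<tau>) t' \<and> sorted_wrt (>) (take (p-1) \<tau>)"] by simp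
                also have "{\<tau>''. distinct \<tau>'' \<and> set \<tau>'' = A' - {M} \<and>
                    (FF (map (\<lambda>x. {x}) (M # \<tau>'')) t' \<and> sorted_wrt (>) (take (p-1) (M # \<tau>'')))}
                    = W (A' - {M}) 0 (p-2) (min t' (Suc M))"
                proof -
                  have lt: "\<forall>b\<in>A'-{M}. b < M"
                  proof
                    fix b assume b: "b \<in> A'-{M}"
                    then have "b \<le> M" using finA' M_def by simp
                    then show "b < M" using b by simp
                  qed
                  have tk2: "take (p-1) (M # \<tau>'') = M # take (p-2) \<tau>''" for \<tau>''
                  proof -
                    have "p - 1 = Suc (p - 2)" using p2 by simp
                    then show ?thesis by simp
                  qed
                  have sub: "set (take (p-2) \<tau>'') \<subseteq> set \<tau>''" for \<tau>'' by (rule set_take_subset)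
                  show ?thesis
                  proof (intro equalityI subsetI)
                    fix \<tau>'' assume a: "\<tau>'' \<in> {\<tau>''. distinct \<tau>'' \<and> set \<tau>'' = A' - {M} \<and>
                      (FF (map (\<lambda>x. {x}) (M # \<tau>'')) t' \<and> sorted_wrt (>) (take (p-1) (M # \<tau>'')))}"
                    then show "\<tau>'' \<in> W (A' - {M}) 0 (p-2) (min t' (Suc M))"
                      unfolding W_def FF_cons_sing tk2 sorted_cons_gt by simp
                  next
                    fix \<tau>'' assume a: "\<tau>'' \<in> W (A' - {M}) 0 (p-2) (min t' (Suc M))"
                    then have d: "distinct \<tau>''" "set \<tau>'' = A' - {M}" "FF (map (\<lambda>x. {x}) \<tau>'') (min t' (Suc M))"
                      "sorted_wrt (>) (take (p-2) \<tau>'')" unfolding W_def by auto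
                    have b1: "\<forall>b\<in>set \<tau>''. b \<le> M"
                    proof
                      fix b assume "b \<in> set \<tau>''"
                      then have "b \<in> A' - {M}" using d(2) by simp
                      then show "b \<le> M" using lt by (simp add: less_imp_le)
                    qed
                    have b2: "\<forall>y\<in>set (take (p-2) \<tau>''). y < M" using d(2) lt sub[of \<tau>''] by auto
                    show "\<tau>'' \<in> {\<tau>''. distinct \<tau>'' \<and> set \<tau>'' = A' - {M} \<and>
                      (FF (map (\<lambda>x. {x}) (M # \<tau>'')) t' \<and> sorted_wrt (>) (take (p-1) (M # \<tau>'')))}"
                      unfolding FF_cons_sing tk2 sorted_cons_gt using d b1 b2 by simp
                  qed
                qed
                finally show ?thesis .
              qed
              have cA2: "card (A' - {M}) = N - 2" using cA MA finA' by simp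
              have cnt2: "cnt (A' - {M}) (min t' (Suc M)) = rk A x - 1"
              proof -
                have mm: "min t' (Suc M) = Suc x" using t'e xM by simp
                have "{a\<in>A' - {M}. min t' (Suc M) \<le> a} = {a\<in>A. x < a} - {M}"
                  unfolding mm A'_def by auto
                moreover have "M \<in> {a\<in>A. x < a}" using MA xM A'_def by auto
                ultimately show ?thesis unfolding cnt_def rk_def using fin by simp
              qed
              have IH1: "int (card (W A' 0 (p-1) t')) = gi (N-1) (rk A x) (p-1)"
                using IH[of A' 0 "p-1" t'] finA' cA N1 pN cntA' rk0 by auto
              have IH2: "int (card (W (A' - {M}) 0 (p-2) (min t' (Suc M)))) = gi (N-2) (rk A x - 1) (p-2)"
                using IH[of "A' - {M}" 0 "p-2" "min t' (Suc M)"] finA' cA2 N1 pN p2 cnt2 by auto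
              have "int (card {\<tau>'\<in>W A' 0 (p-1) t'. \<forall>y\<in>set (take (p-1) \<tau>'). y < x})
                  = gi (N-1) (rk A x) (p-1) - gi (N-2) (rk A x - 1) (p-2)"
                unfolding e2 cardsub using le1 IH1 IH2 hdset by (simp add: of_nat_diff)
              then show ?thesis unfolding e1 f_def using rk0 condr by simp
            qed
          qed
        qed
        have "int (card (W A 0 p t)) = (\<Sum>x\<in>A. int (card {\<tau>'. distinct \<tau>' \<and> set \<tau>' = A - {x} \<and>
            FF (map (\<lambda>x. {x}) (x # \<tau>')) t \<and> sorted_wrt (>) (take p (drop 0 (x # \<tau>')))}))"
          unfolding W_peel[OF fin Ane] by simp
        also have "\<dots> = (\<Sum>x\<in>A. f (rk A x))" using inner by (rule sum.cong[OF refl])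
        also have "\<dots> = (\<Sum>r<N. f r)" using reindex_rk[OF fin] N_def by simp
        also have "\<dots> = gi N c p" unfolding f_def using Did[OF p2 pN cN] by simp
        finally show ?thesis using j0 N_def c_def by simp
      qed
    qed
  qed
qed

definition pd :: "nat set list \<Rightarrow> bool" where
  "pd Bs \<longleftrightarrow> (\<forall>i < length Bs. \<forall>j < length Bs. i \<noteq> j \<longrightarrow> Bs ! i \<inter> Bs ! j = {})"

lemma pd_Nil: "pd []" unfolding pd_def by simp

lemma pd_Cons: "pd (B # Bs) \<longleftrightarrow> pd Bs \<and> B \<inter> \<Union>(set Bs) = {}"
proof
  assume a: "pd (B # Bs)"
  have "pd Bs" unfolding pd_def
  proof (intro allI impI)
    fix i j assume "i < length Bs" "j < length Bs" "i \<noteq> j"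
    then show "Bs ! i \<inter> Bs ! j = {}" using a[unfolded pd_def, rule_format, of "Suc i" "Suc j"] by simp
  qed
  moreover have "B \<inter> \<Union>(set Bs) = {}"
  proof (rule ccontr)
    assume "B \<inter> \<Union>(set Bs) \<noteq> {}"
    then obtain b k where "b \<in> B" "k < length Bs" "b \<in> Bs ! k" by (metis Int_emptyI UnionE in_set_conv_nth)
    then show False using a[unfolded pd_def, rule_format, of 0 "Suc k"] by auto
  qed
  ultimately show "pd Bs \<and> B \<inter> \<Union>(set Bs) = {}" by blast
next
  assume a: "pd Bs \<and> B \<inter> \<Union>(set Bs) = {}"
  show "pd (B # Bs)" unfolding pd_def
  proof (intro allI impI)
    fix i j assume ij: "i < length (B # Bs)" "j < length (B # Bs)" "i \<noteq> j"
    show "(B # Bs) ! i \<inter> (B # Bs) ! j = {}"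
    proof (cases i)
      case 0
      then obtain j' where j': "j = Suc j'" using ij by (cases j) auto
      then have "Bs ! j' \<in> set Bs" using ij by simp
      then show ?thesis using a 0 j' by auto
    next
      case (Suc i')
      show ?thesis
      proof (cases j)
        case 0
        then have "Bs ! i' \<in> set Bs" using ij Suc by simp
        then show ?thesis using a 0 Suc by auto
      next
        case (Suc j')
        then show ?thesis using a ij \<open>i = Suc i'\<close> unfolding pd_def by auto
      qed
    qed
  qed
qed

lemma pd_sing_app: "pd (map (\<lambda>x. {x}) L @ X) \<longleftrightarrow> distinct L \<and> set L \<inter> \<Union>(set X) = {} \<and> pd X"
  by (induction L) (auto simp: pd_Cons)

lemma pd_blk: "pd (map (\<lambda>x. {x}) L @ S # map (\<lambda>x. {x}) R) \<longleftrightarrow>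
   distinct L \<and> distinct R \<and> set L \<inter> S = {} \<and> set L \<inter> set R = {} \<and> S \<inter> set R = {}"
proof -
  have "pd (map (\<lambda>x. {x}) R) \<longleftrightarrow> distinct R" using pd_sing_app[of R "[]"] pd_Nil by simp
  moreover have "\<Union>(set (S # map (\<lambda>x. {x}) R)) = S \<union> set R" by auto
  ultimately show ?thesis unfolding pd_sing_app pd_Cons by auto
qed

lemma blk_nth:
  assumes "i < length L + 1 + length R"
  shows "(map (\<lambda>x. {x}) L @ S # map (\<lambda>x. {x}) R) ! i =
     (if i < length L then {L!i} else if i = length L then S else {R ! (i - length L - 1)})"
proof -
  consider "i < length L" | "i = length L" | "length L < i" by linarith
  then show ?thesis
  proof cases
    case 1 then show ?thesis by (simp add: nth_append)
  next
    case 2 then show ?thesis by (simp add: nth_append)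
  next
    case 3
    then obtain k where k: "i - length L = Suc k" by (metis Suc_diff_Suc)
    then show ?thesis using 3 assms by (simp add: nth_append)
  qed
qed

lemma dec_unique:
  fixes xs ys :: "nat list"
  assumes "sorted_wrt (>) xs" "sorted_wrt (>) ys" "set xs = set ys"
  shows "xs = ys"
proof -
  have "sorted_wrt (<) (rev xs)" "sorted_wrt (<) (rev ys)" using assms by (simp_all add: sorted_wrt_rev)
  then have "sorted (rev xs)" "distinct (rev xs)" "sorted (rev ys)" "distinct (rev ys)"
    by (simp_all add: strict_sorted_iff)
  then have "rev xs = rev ys" using assms(3) by (intro sorted_distinct_set_unique) auto
  then show ?thesis by simp
qed

lemma sing_the_elem: "(\<forall>B\<in>set xs. card B = 1) \<Longrightarrow> map (\<lambda>x. {x}) (map the_elem xs) = xs"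
proof (induction xs)
  case Nil then show ?case by simp
next
  case (Cons B xs)
  then obtain b where "B = {b}" by (meson card_1_singletonE list.set_intros(1))
  then show ?case using Cons by simp
qed

definition blk :: "nat \<Rightarrow> nat list \<Rightarrow> nat \<Rightarrow> nat set list" where
  "blk p \<tau> j = map (\<lambda>x. {x}) (take j \<tau>) @ set (take p (drop j \<tau>)) # map (\<lambda>x. {x}) (drop (j+p) \<tau>)"

definition Mset :: "nat \<Rightarrow> nat \<Rightarrow> (nat set list \<times> nat) set" where
  "Mset n p = {(Bs, j). ordered_set_partition n Bs \<and> length Bs = n - p + 1 \<and>
              j < length Bs \<and> card (Bs ! j) = p \<and>
              (\<forall>i < length Bs. i \<noteq> j \<longrightarrow> card (Bs ! i) = 1) \<and>
              avoids_123 Bs}"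

lemma osp_iff: "ordered_set_partition n Bs \<longleftrightarrow> {} \<notin> set Bs \<and> pd Bs \<and> \<Union>(set Bs) = {1..n}"
  unfolding ordered_set_partition_def pd_def by (auto simp: in_set_conv_nth)

lemma has12_none: "\<forall>b\<in>\<Union>(set Bs). b \<le> n \<Longrightarrow> \<not> has12 Bs (Suc n)"
proof
  assume a: "\<forall>b\<in>\<Union>(set Bs). b \<le> n" and "has12 Bs (Suc n)"
  then obtain i k b1 b2 where h: "i < k" "k < length Bs" "b1 \<in> Bs!i" "b2 \<in> Bs!k" "Suc n \<le> b1" "b1 < b2"
    unfolding has12_def by blast
  have "b2 \<in> \<Union>(set Bs)" using h(2,4) ex_nth_mem[of Bs b2] by blast
  then have "b2 \<le> n" using a by blast
  then show False using h by simp
qed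

lemma split3: "xs = take j xs @ take p (drop j xs) @ drop (j+p) xs"
proof -
  have e: "drop p (drop j xs) = drop (j+p) xs" by (simp add: add.commute)
  have 1: "take j xs @ drop j xs = xs" by (rule append_take_drop_id)
  have 2: "take p (drop j xs) @ drop p (drop j xs) = drop j xs" by (rule append_take_drop_id)
  show ?thesis unfolding e[symmetric] 2 1 by (rule refl)
qed

lemma forward:
  assumes p1: "1 \<le> p" and jn: "j \<le> n - p" and pn: "p \<le> n" and W: "\<tau> \<in> W {1..n} j p (Suc n)"
  shows "(blk p \<tau> j, j) \<in> Mset n p"
proof -
  define L where "L = take j \<tau>"
  define D where "D = take p (drop j \<tau>)"
  define R where "R = drop (j+p) \<tau>"
  have d: "distinct \<tau>" and st: "set \<tau> = {1..n}" and F: "FF (map (\<lambda>x. {x}) \<tau>) (Suc n)"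
    and so: "sorted_wrt (>) D" using W unfolding W_def D_def by auto
  have len: "length \<tau> = n" using d st distinct_card by fastforce
  have tau: "\<tau> = L @ D @ R" unfolding L_def D_def R_def by (rule split3)
  have lL: "length L = j" and lD: "length D = p" and lR: "length R = n - j - p"
    using len jn pn unfolding L_def D_def R_def by auto
  have Dne: "D \<noteq> []" using lD p1 by auto
  have dist: "distinct L" "distinct D" "distinct R" "set L \<inter> set D = {}" "set L \<inter> set R = {}" "set D \<inter> set R = {}"
    using d unfolding tau by auto
  have bl: "blk p \<tau> j = map (\<lambda>x. {x}) L @ set D # map (\<lambda>x. {x}) R"
    unfolding blk_def L_def D_def R_def ..
  have lB: "length (blk p \<tau> j) = n - p + 1" unfolding bl using lL lR jn pn by simp
  have osp: "ordered_set_partition n (blk p \<tau> j)"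
  proof -
    have "{} \<notin> set (blk p \<tau> j)" unfolding bl using Dne by auto
    moreover have "pd (blk p \<tau> j)" unfolding bl pd_blk using dist by auto
    moreover have "\<Union>(set (blk p \<tau> j)) = {1..n}" unfolding bl using st tau by auto
    ultimately show ?thesis unfolding osp_iff by simp
  qed
  have jB: "blk p \<tau> j ! j = set D" unfolding bl using lL by (simp add: nth_append)
  have cj: "card (set D) = p" using dist lD by (simp add: distinct_card)
  have others: "\<forall>i < length (blk p \<tau> j). i \<noteq> j \<longrightarrow> card (blk p \<tau> j ! i) = 1"
  proof (intro allI impI)
    fix i assume i: "i < length (blk p \<tau> j)" "i \<noteq> j"
    have "i < length L + 1 + length R" using i unfolding bl by simp
    then show "card (blk p \<tau> j ! i) = 1" unfolding bl blk_nth[OF \<open>i < length L + 1 + length R\<close>] using i lL by simp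
  qed
  have av: "avoids_123 (blk p \<tau> j)"
  proof -
    have "FF (blk p \<tau> j) (Suc n)" unfolding bl blocks_equiv[OF so Dne] using F tau by simp
    then show ?thesis unfolding FF_def avoids_123_def by simp
  qed
  have jlt: "j < length (blk p \<tau> j)" using lB jn pn by simp
  have cj': "card (blk p \<tau> j ! j) = p" using jB cj by simp
  show ?thesis unfolding Mset_def using osp lB jlt cj' others av by blast
qed

lemma backward:
  assumes p1: "1 \<le> p" and M: "(Bs, j) \<in> Mset n p"
  shows "\<exists>\<tau>. j \<le> n - p \<and> \<tau> \<in> W {1..n} j p (Suc n) \<and> blk p \<tau> j = Bs"
proof -
  have osp: "ordered_set_partition n Bs" and lB: "length Bs = n - p + 1" and jl: "j < length Bs"
    and cS: "card (Bs ! j) = p" and others: "\<forall>i < length Bs. i \<noteq> j \<longrightarrow> card (Bs ! i) = 1"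
    and av: "avoids_123 Bs" using M unfolding Mset_def by auto
  define S where "S = Bs ! j"
  define L where "L = map the_elem (take j Bs)"
  define R where "R = map the_elem (drop (Suc j) Bs)"
  have c1: "\<forall>B\<in>set (take j Bs). card B = 1"
  proof
    fix B assume "B \<in> set (take j Bs)"
    then obtain i where "i < length (take j Bs)" "take j Bs ! i = B" by (auto simp: in_set_conv_nth)
    then show "card B = 1" using others jl by auto
  qed
  have c2: "\<forall>B\<in>set (drop (Suc j) Bs). card B = 1"
  proof
    fix B assume "B \<in> set (drop (Suc j) Bs)"
    then obtain i where "i < length (drop (Suc j) Bs)" "drop (Suc j) Bs ! i = B" by (auto simp: in_set_conv_nth)
    then show "card B = 1" using others jl by auto
  qed
  have Bs: "Bs = map (\<lambda>x. {x}) L @ S # map (\<lambda>x. {x}) R"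
    unfolding L_def R_def S_def sing_the_elem[OF c1] sing_the_elem[OF c2]
    using id_take_nth_drop[OF jl] .
  have lL: "length L = j" using jl unfolding L_def by simp
  have cS0: "card S \<noteq> 0" using cS p1 S_def by simp
  have finS: "finite S"
  proof (rule ccontr)
    assume "infinite S"
    then have "card S = 0" by simp
    then show False using cS0 by simp
  qed
  have Sne: "S \<noteq> {}" using cS0 by auto
  define D where "D = rev (sorted_list_of_set S)"
  have D: "set D = S" "sorted_wrt (>) D" "distinct D" using finS unfolding D_def
    by (simp_all add: sorted_wrt_rev)
  have lD: "length D = p" using distinct_card[OF D(3)] D(1) cS S_def by simp
  have Dne: "D \<noteq> []" using lD p1 by auto
  define \<tau> where "\<tau> = L @ D @ R"
  have pdB: "pd Bs" and un: "\<Union>(set Bs) = {1..n}" using osp unfolding osp_iff by auto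
  have dist: "distinct L" "distinct R" "set L \<inter> S = {}" "set L \<inter> set R = {}" "S \<inter> set R = {}"
    using pdB unfolding Bs pd_blk by auto
  have d: "distinct \<tau>" unfolding \<tau>_def using dist D by auto
  have st: "set \<tau> = {1..n}" using un unfolding Bs \<tau>_def using D by auto
  have t1: "take j \<tau> = L" "take p (drop j \<tau>) = D" "drop (j+p) \<tau> = R"
    unfolding \<tau>_def using lL lD by auto
  have bl: "blk p \<tau> j = Bs" unfolding blk_def t1 D(1) Bs ..
  have F: "FF (map (\<lambda>x. {x}) \<tau>) (Suc n)"
  proof -
    have "\<not> has12 Bs (Suc n)" using un by (intro has12_none) auto
    then have "FF Bs (Suc n)" using av unfolding FF_def avoids_123_def by simp
    then show ?thesis unfolding \<tau>_def using blocks_equiv[OF D(2) Dne, of L R "Suc n"] Bs D(1) by simp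
  qed
  have "\<tau> \<in> W {1..n} j p (Suc n)" unfolding W_def using d st F t1 D by simp
  moreover have "j \<le> n - p" using jl lB by simp
  ultimately show ?thesis using bl by blast
qed

lemma blk_inj:
  assumes "\<tau>1 \<in> W A j p t" "\<tau>2 \<in> W A j p t" "blk p \<tau>1 j = blk p \<tau>2 j" "j + p \<le> length \<tau>1" "j + p \<le> length \<tau>2"
  shows "\<tau>1 = \<tau>2"
proof -
  have l1: "length (map (\<lambda>x. {x}) (take j \<tau>1)) = length (map (\<lambda>x. {x}) (take j \<tau>2))" using assms by simp
  have e: "map (\<lambda>x. {x}) (take j \<tau>1) = map (\<lambda>x. {x}) (take j \<tau>2) \<and>
      set (take p (drop j \<tau>1)) # map (\<lambda>x. {x}) (drop (j+p) \<tau>1) = set (take p (drop j \<tau>2)) # map (\<lambda>x. {x}) (drop (j+p) \<tau>2)"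
  proof -
    have e0: "map (\<lambda>x. {x}) (take j \<tau>1) @ set (take p (drop j \<tau>1)) # map (\<lambda>x. {x}) (drop (j+p) \<tau>1) =
      map (\<lambda>x. {x}) (take j \<tau>2) @ set (take p (drop j \<tau>2)) # map (\<lambda>x. {x}) (drop (j+p) \<tau>2)"
      using assms(3) unfolding blk_def .
    from e0 show ?thesis by (rule iffD1[OF append_eq_append_conv[OF disjI1[OF l1]]])
  qed
  have injs: "inj (\<lambda>x::nat. {x})" by simp
  have a: "take j \<tau>1 = take j \<tau>2" using e injs by simp
  have b: "drop (j+p) \<tau>1 = drop (j+p) \<tau>2" using e injs by simp
  have s1: "sorted_wrt (>) (take p (drop j \<tau>1))" using assms(1) unfolding W_def by simp
  have s2: "sorted_wrt (>) (take p (drop j \<tau>2))" using assms(2) unfolding W_def by simp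
  have seq: "set (take p (drop j \<tau>1)) = set (take p (drop j \<tau>2))" using e by simp
  have c: "take p (drop j \<tau>1) = take p (drop j \<tau>2)" by (rule dec_unique[OF s1 s2 seq])
  have "\<tau>1 = take j \<tau>1 @ take p (drop j \<tau>1) @ drop (j+p) \<tau>1" by (rule split3)
  also have "\<dots> = take j \<tau>2 @ take p (drop j \<tau>2) @ drop (j+p) \<tau>2" using a b c by simp
  also have "\<dots> = \<tau>2" by (rule split3[symmetric])
  finally show ?thesis .
qed

lemma final_arith:
  assumes "p < n"
  shows "real (n - p + 1) * real_of_int (gi n 0 p) = real (n - p + 1) * real (p + 1) * real ((2 * n - p) choose (n - p)) / real (n + 1)"
proof -
  define m where "m = 2 * n - p"
  have g: "gi n 0 p = int (m choose n) - int (m choose (n+1))" unfolding gi_def m_def by simp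
  have a1: "Suc n * (m choose Suc n) = m * ((m - 1) choose n)" by (rule binomial_absorption)
  have a2: "(m - n) * (m choose n) = m * ((m - 1) choose n)" by (rule binomial_absorb_comp)
  have mn: "m - n = n - p" unfolding m_def using assms by simp
  have k: "(n + 1) * (m choose (n+1)) = (n - p) * (m choose n)" using a1 a2 mn by simp
  have sym: "m choose n = m choose (n - p)"
  proof -
    have "n \<le> m" unfolding m_def using assms by simp
    then have "m choose n = m choose (m - n)" by (rule binomial_symmetric)
    then show ?thesis using mn by simp
  qed
  have kr: "real (n + 1) * real (m choose (n+1)) = real (n - p) * real (m choose n)"
    using k by (metis of_nat_mult)
  have np: "real (n - p) = real n - real p" using assms by simp
  have "real (n + 1) * (real (m choose n) - real (m choose (n+1))) = real (p + 1) * real (m choose n)"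
    using kr np by (simp add: algebra_simps)
  then have "real (m choose n) - real (m choose (n+1)) = real (p + 1) * real (m choose n) / real (n + 1)"
    by (simp add: field_simps)
  then show ?thesis unfolding g sym[symmetric] m_def[symmetric] by simp
qed

theorem theorem6:
  fixes n p :: nat
  assumes "1 \<le> p" and "p < n"
  shows "real (card {(Bs, j). ordered_set_partition n Bs \<and> length Bs = n - p + 1 \<and>
              j < length Bs \<and> card (Bs ! j) = p \<and>
              (\<forall>i < length Bs. i \<noteq> j \<longrightarrow> card (Bs ! i) = 1) \<and>
              avoids_123 Bs})
         = real (n - p + 1) * real (p + 1) * real ((2 * n - p) choose (n - p)) / real (n + 1)"
proof -
  have setEq: "{(Bs, j). ordered_set_partition n Bs \<and> length Bs = n - p + 1 \<and>
              j < length Bs \<and> card (Bs ! j) = p \<and>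
              (\<forall>i < length Bs. i \<noteq> j \<longrightarrow> card (Bs ! i) = 1) \<and>
              avoids_123 Bs} = Mset n p" unfolding Mset_def ..
  define Dom where "Dom = Sigma {0..n-p} (\<lambda>j. W {1..n} j p (Suc n))"
  define \<Phi> where "\<Phi> = (\<lambda>(j::nat, \<tau>::nat list). (blk p \<tau> j, j))"
  have lenW: "length \<tau> = n" if "\<tau> \<in> W {1..n} j p (Suc n)" for \<tau> j
    using that unfolding W_def by (auto dest: distinct_card)
  have img: "\<Phi> ` Dom = Mset n p"
  proof (intro equalityI subsetI)
    fix y assume "y \<in> \<Phi> ` Dom"
    then obtain j \<tau> where "j \<in> {0..n-p}" "\<tau> \<in> W {1..n} j p (Suc n)" "y = (blk p \<tau> j, j)"
      unfolding Dom_def \<Phi>_def by auto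
    then show "y \<in> Mset n p" using forward[OF assms(1)] assms(2) by auto
  next
    fix y assume y: "y \<in> Mset n p"
    obtain Bs j where yy: "y = (Bs, j)" by (cases y)
    then obtain \<tau> where "j \<le> n - p" "\<tau> \<in> W {1..n} j p (Suc n)" "blk p \<tau> j = Bs"
      using backward[OF assms(1)] y by blast
    then have "(j, \<tau>) \<in> Dom" "\<Phi> (j, \<tau>) = y" unfolding Dom_def \<Phi>_def using yy by auto
    then show "y \<in> \<Phi> ` Dom" by (metis image_eqI)
  qed
  have inj: "inj_on \<Phi> Dom"
  proof (rule inj_onI)
    fix a b assume a: "a \<in> Dom" and b: "b \<in> Dom" and e: "\<Phi> a = \<Phi> b"
    obtain j1 \<tau>1 where a': "a = (j1, \<tau>1)" by (cases a)
    obtain j2 \<tau>2 where b': "b = (j2, \<tau>2)" by (cases b)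
    have j: "j1 = j2" using e unfolding a' b' \<Phi>_def by simp
    have w1: "\<tau>1 \<in> W {1..n} j1 p (Suc n)" "j1 \<le> n - p" using a unfolding a' Dom_def by auto
    have w2: "\<tau>2 \<in> W {1..n} j1 p (Suc n)" using b j unfolding b' Dom_def by auto
    have bl: "blk p \<tau>1 j1 = blk p \<tau>2 j1" using e j unfolding a' b' \<Phi>_def by simp
    have "\<tau>1 = \<tau>2" using blk_inj[OF w1(1) w2 bl] lenW[OF w1(1)] lenW[OF w2] w1(2) assms by simp
    then show "a = b" using a' b' j by simp
  qed
  have finW: "finite (W {1..n} j p (Suc n))" for j unfolding W_def by (rule finite_arr) simp
  have "card (Mset n p) = card Dom" using card_image[OF inj] img by simp
  also have "\<dots> = (\<Sum>j\<in>{0..n-p}. card (W {1..n} j p (Suc n)))"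
    unfolding Dom_def using finW by (intro card_SigmaI) auto
  finally have c1: "int (card (Mset n p)) = (\<Sum>j\<in>{0..n-p}. int (card (W {1..n} j p (Suc n))))" by simp
  have cnt0: "cnt {1..n} (Suc n) = 0" unfolding cnt_def by simp
  have "int (card (W {1..n} j p (Suc n))) = gi n 0 p" if "j \<in> {0..n-p}" for j
    using Wcount[of "{1..n}" j p "Suc n"] that assms cnt0 by simp
  then have "int (card (Mset n p)) = (\<Sum>j\<in>{0..n-p}. gi n 0 p)" unfolding c1 by (rule sum.cong[OF refl])
  also have "\<dots> = int (n - p + 1) * gi n 0 p" by simp
  finally have "real (card (Mset n p)) = real (n - p + 1) * real_of_int (gi n 0 p)"
    by (metis of_int_mult of_int_of_nat_eq)
  then show ?thesis unfolding setEq using final_arith[OF assms(2)] by simp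
qed

end
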